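(* Let $p\ge 2$, $w\ge 0$, $z\in\mathbb{R}^{p-1}$. For $\lambda>0$ let $(\hat\beta^+(\lambda),\hat\beta^-(\lambda),\hat\theta(\lambda))$ be the unique solution of \[ \min_{\beta^\pm\in\mathbb{R},\,\theta\in\mathbb{R}^{p-1}}\ \frac12\bigl(w-(\beta^+-\beta^-)\bigr)^2+\frac12\|z-\theta\|_2^2+\lambda(\beta^++\beta^-)+\lambda\|\theta\|_1 \quad\text{s.t. } \beta^+\ge0,\ \beta^-\ge0,\ \|\theta\|_1\le\beta^++\beta^-. \] Then for each coordinate $k\in\{1,\dots,p-1\}$, the function $\lambda\mapsto|\hat\theta_k(\lambda)|$ is non-increasing on $(0,\infty)$.
   Context: $\|\cdot\|_1$ and $\|\cdot\|_2$ denote the $\ell_1$ and Euclidean norms. The solution of the displayed problem exists and is unique for every $\lambda>0$. *)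

theory Defs
  imports "HOL-Analysis.Analysis"
begin

text \<open>Coordinates of theta are indexed by a finite type 'n with CARD('n) = p - 1 (so p \<ge> 2).\<close>

definition l1norm :: "real ^ 'n \<Rightarrow> real" where
  "l1norm \<theta> = (\<Sum>i\<in>UNIV. \<bar>\<theta> $ i\<bar>)"

definition objective :: "real \<Rightarrow> real ^ 'n \<Rightarrow> real \<Rightarrow> real \<Rightarrow> real \<Rightarrow> real ^ 'n \<Rightarrow> real" where
  "objective w z lam bp bm \<theta> =
     (1/2) * (w - (bp - bm))^2 + (1/2) * (norm (z - \<theta>))^2 + lam * (bp + bm) + lam * l1norm \<theta>"

definition feasible :: "real \<Rightarrow> real \<Rightarrow> real ^ 'n \<Rightarrow> bool" where
  "feasible bp bm \<theta> \<longleftrightarrow> bp \<ge> 0 \<and> bm \<ge> 0 \<and> l1norm \<theta> \<le> bp + bm"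

definition is_solution :: "real \<Rightarrow> real ^ 'n \<Rightarrow> real \<Rightarrow> real \<times> real \<times> (real ^ 'n) \<Rightarrow> bool" where
  "is_solution w z lam s \<longleftrightarrow>
     (case s of (bp, bm, \<theta>) \<Rightarrow> feasible bp bm \<theta> \<and>
        (\<forall>bp' bm' \<theta>'. feasible bp' bm' \<theta>' \<longrightarrow>
            objective w z lam bp bm \<theta> \<le> objective w z lam bp' bm' \<theta>'))"

definition solution :: "real \<Rightarrow> real ^ 'n \<Rightarrow> real \<Rightarrow> real \<times> real \<times> (real ^ 'n)" where
  "solution w z lam = (THE s. is_solution w z lam s)"

definition theta_hat :: "real \<Rightarrow> real ^ 'n \<Rightarrow> real \<Rightarrow> real ^ 'n" where
  "theta_hat w z lam = snd (snd (solution w z lam))"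

end

theory Submission
  imports Defs
begin

definition softv :: "real ^ 'n \<Rightarrow> real \<Rightarrow> real ^ 'n" where
  "softv z t = (\<chi> i. sgn (z$i) * max (\<bar>z$i\<bar> - t) 0)"

definition Tf :: "real ^ 'n \<Rightarrow> real \<Rightarrow> real" where
  "Tf z t = (\<Sum>i\<in>UNIV. max (\<bar>z$i\<bar> - t) 0)"

lemma abs_soft1: "(t::real) \<ge> 0 \<Longrightarrow> \<bar>sgn a * max (\<bar>a\<bar> - t) 0\<bar> = max (\<bar>a\<bar> - t) 0"
  by (cases "a = 0"; cases "a > 0") (auto simp: abs_mult)

lemma abs_soft: "t \<ge> 0 \<Longrightarrow> \<bar>softv z t $ i\<bar> = max (\<bar>z$i\<bar> - t) 0"
  by (simp add: softv_def abs_soft1)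

lemma l1_soft: "t \<ge> 0 \<Longrightarrow> l1norm (softv z t) = Tf z t"
  by (simp add: l1norm_def Tf_def abs_soft)

lemma coord:
  fixes z x t :: real
  assumes "t \<ge> 0"
  defines "y \<equiv> sgn z * max (\<bar>z\<bar> - t) 0"
  shows "(1/2)*(z-x)^2 + t*\<bar>x\<bar> \<ge> (1/2)*(z-y)^2 + t*\<bar>y\<bar> + (1/2)*(x-y)^2"
proof (cases "\<bar>z\<bar> \<le> t")
  case True
  then have "y = 0" by (simp add: y_def)
  moreover have "z*x \<le> t*\<bar>x\<bar>"
  proof -
    have "z*x \<le> \<bar>z\<bar>*\<bar>x\<bar>" by (metis abs_ge_self abs_mult)
    also have "\<dots> \<le> t*\<bar>x\<bar>" using True by (simp add: mult_right_mono)
    finally show ?thesis .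
  qed
  ultimately show ?thesis by (simp add: power2_eq_square algebra_simps)
next
  case False
  show ?thesis
  proof (cases "z > 0")
    case True
    with False have y: "y = z - t" by (simp add: y_def)
    have "t * x \<le> t*\<bar>x\<bar>" using assms(1) by (simp add: mult_left_mono)
    moreover have "\<bar>z - t\<bar> = z - t" using True False by auto
    ultimately show ?thesis unfolding y by (simp add: power2_eq_square algebra_simps)
  next
    case f2: False
    have zn: "z < 0" using False f2 assms(1) by auto
    then have y: "y = z + t" "z < 0" using False by (auto simp: y_def)
    have "- t * x \<le> t*\<bar>x\<bar>" using assms(1) mult_left_mono[of "-x" "\<bar>x\<bar>" t] by simp
    then show ?thesis using y False assms(1) unfolding y(1) by (simp add: power2_eq_square algebra_simps)
  qed
qed

lemma norm_sq: "(norm (v :: real ^ 'n))^2 = (\<Sum>i\<in>UNIV. (v$i)^2)"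
  unfolding power2_norm_eq_inner inner_vec_def by (simp add: power2_eq_square)

lemma main_ineq:
  fixes z th' :: "real ^ 'n"
  assumes lam: "lam > 0" "lam \<le> t" "t \<le> 2*lam"
  and b: "b = w - 2*lam + t"
  and s: "lam * s = (t - lam) * Tf z t + (2*lam - t) * b"
  and fe: "feasible bp' bm' th'"
  shows "objective w z lam ((s + b)/2) ((s-b)/2) (softv z t) + (1/2)*((bp'-bm') - b)^2
          + (1/2)*(\<Sum>i\<in>UNIV. (th'$i - softv z t $i)^2) \<le> objective w z lam bp' bm' th'"
proof -
  define th where "th = softv z t"
  have t0: "t \<ge> 0" using lam by linarith
  have c1: "(\<Sum>i\<in>UNIV. (1/2)*(z$i-th$i)^2 + t*\<bar>th$i\<bar> + (1/2)*(th'$i-th$i)^2)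
      \<le> (\<Sum>i\<in>UNIV. (1/2)*(z$i-th'$i)^2 + t*\<bar>th'$i\<bar>)"
  proof (rule sum_mono)
    fix i
    show "(1/2)*(z$i-th$i)^2 + t*\<bar>th$i\<bar> + (1/2)*(th'$i-th$i)^2 \<le> (1/2)*(z$i-th'$i)^2 + t*\<bar>th'$i\<bar>"
      using coord[OF t0, of "z$i" "th'$i"] unfolding th_def softv_def by simp
  qed
  have e1: "(\<Sum>i\<in>UNIV. (1/2)*(z$i-th$i)^2 + t*\<bar>th$i\<bar> + (1/2)*(th'$i-th$i)^2)
     = (1/2)*(\<Sum>i\<in>UNIV. (z$i-th$i)^2) + t * l1norm th + (1/2)*(\<Sum>i\<in>UNIV. (th'$i-th$i)^2)"
    by (simp add: sum.distrib sum_distrib_left l1norm_def)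
  have e2: "(\<Sum>i\<in>UNIV. (1/2)*(z$i-th'$i)^2 + t*\<bar>th'$i\<bar>)
     = (1/2)*(\<Sum>i\<in>UNIV. (z$i-th'$i)^2) + t * l1norm th'"
    by (simp add: sum.distrib sum_distrib_left l1norm_def)
  have n1: "(norm (z - th))^2 = (\<Sum>i\<in>UNIV. (z$i-th$i)^2)" by (simp add: norm_sq)
  have n2: "(norm (z - th'))^2 = (\<Sum>i\<in>UNIV. (z$i-th'$i)^2)" by (simp add: norm_sq)
  have L: "l1norm th = Tf z t" using l1_soft[OF t0] th_def by simp
  have f: "bp' \<ge> 0" "bm' \<ge> 0" "l1norm th' \<le> bp' + bm'" using fe by (auto simp: feasible_def)
  have sb1: "(t-lam) * l1norm th' \<le> (t-lam) * (bp'+bm')"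
    using f lam by (intro mult_left_mono) auto
  have sb2: "(2*lam-t) * (bp'-bm') \<le> (2*lam-t) * (bp'+bm')"
    using f lam by (intro mult_left_mono) auto
  have beta: "(1/2)*(w-(bp'-bm'))^2 + (2*lam-t)*(bp'-bm') = (1/2)*(w-b)^2 + (2*lam-t)*b + (1/2)*((bp'-bm')-b)^2"
    unfolding b by (simp add: power2_eq_square algebra_simps)
  have o1: "objective w z lam ((s + b)/2) ((s-b)/2) th = (1/2)*(w-b)^2 + (1/2)*(\<Sum>i\<in>UNIV. (z$i-th$i)^2) + lam * s + lam * l1norm th"
    unfolding objective_def n1 by (simp add: field_simps)
  have o2: "objective w z lam bp' bm' th' = (1/2)*(w-(bp'-bm'))^2 + (1/2)*(\<Sum>i\<in>UNIV. (z$i-th'$i)^2) + lam*(bp'+bm') + lam * l1norm th'"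
    unfolding objective_def n2 by simp
  have "lam * l1norm th + lam * s = t * l1norm th + (2*lam - t) * b"
    using s L by (simp add: algebra_simps)
  moreover have "lam * l1norm th' + lam * (bp'+bm') \<ge> t * l1norm th' + (2*lam - t)*(bp'-bm')"
    using sb1 sb2 by (simp add: algebra_simps)
  ultimately show ?thesis unfolding th_def[symmetric] o1 o2 using c1 e1 e2 beta by linarith
qed

definition Pt :: "real \<Rightarrow> real ^ 'n \<Rightarrow> real \<Rightarrow> real \<Rightarrow> bool" where
  "Pt w z lam t \<longleftrightarrow> lam \<le> t \<and> t \<le> 2*lam \<and> (t > lam \<longrightarrow> Tf z t \<ge> w - 2*lam + t)
     \<and> (t < 2*lam \<longrightarrow> Tf z t \<le> w - 2*lam + t)"

lemma Tf_nonneg: "Tf z t \<ge> 0"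
  unfolding Tf_def by (rule sum_nonneg) auto

lemma Tf_mono: "t1 \<le> t2 \<Longrightarrow> Tf z t2 \<le> Tf z t1"
  unfolding Tf_def by (rule sum_mono) auto

lemma Tf_cont: "continuous_on A (\<lambda>t. Tf z t)"
  unfolding Tf_def by (intro continuous_intros)

lemma exists_t:
  assumes "lam > 0" shows "\<exists>t. Pt w z lam t"
proof -
  define phi where "phi t = Tf z t - (w - 2*lam + t)" for t
  show ?thesis
  proof (cases "phi lam \<le> 0")
    case True
    then have "Pt w z lam lam" using assms by (simp add: Pt_def phi_def)
    then show ?thesis ..
  next
    case F1: False
    show ?thesis
    proof (cases "phi (2*lam) \<ge> 0")
      case True
      then have "Pt w z lam (2*lam)" using assms by (simp add: Pt_def phi_def)
      then show ?thesis ..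
    next
      case False
      have "continuous_on {lam..2*lam} phi" unfolding phi_def
        by (intro continuous_intros Tf_cont)
      then obtain t where t: "lam \<le> t" "t \<le> 2*lam" "phi t = 0"
        using IVT2'[of phi "2*lam" 0 lam] F1 False assms by auto
      then have "Pt w z lam t" by (simp add: Pt_def phi_def)
      then show ?thesis ..
    qed
  qed
qed

lemma sol_eq:
  fixes z :: "real ^ 'n"
  assumes lam: "lam > 0" and w: "w \<ge> 0" and P: "Pt w z lam t"
  shows "theta_hat w z lam = softv z t"
proof -
  define b where "b = w - 2*lam + t"
  define T where "T = Tf z t"
  define s where "s = ((t - lam) * T + (2*lam - t) * b) / lam"
  have hs: "lam * s = (t - lam) * Tf z t + (2*lam - t) * b"
    using lam unfolding s_def T_def by simp
  have t1: "lam \<le> t" "t \<le> 2*lam" using P by (auto simp: Pt_def)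
  have T0: "T \<ge> 0" unfolding T_def by (rule Tf_nonneg)
  have sb: "s \<ge> \<bar>b\<bar> \<and> s \<ge> T"
  proof (cases "t = lam")
    case True
    then have "s = b" using lam by (simp add: s_def)
    moreover have "T \<le> b" using P True lam by (auto simp: Pt_def T_def b_def)
    ultimately show ?thesis using T0 by auto
  next
    case F: False
    show ?thesis
    proof (cases "t = 2*lam")
      case True
      then have "s = T" using lam by (simp add: s_def)
      moreover have "T \<ge> b" "b = w" using P True lam by (auto simp: Pt_def T_def b_def)
      ultimately show ?thesis using w by auto
    next
      case False
      then have "T = b" using P F t1 by (auto simp: Pt_def T_def b_def)
      then have "s = T" using lam unfolding s_def by (simp add: field_simps)
      then show ?thesis using \<open>T = b\<close> T0 by auto
    qed
  qed
  define cand where "cand = ((s+b)/2, (s-b)/2, softv z t)"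
  have t0: "t \<ge> 0" using t1 lam by linarith
  have fc: "feasible ((s+b)/2) ((s-b)/2) (softv z t)"
  proof -
    have "(s+b)/2 \<ge> 0" "(s-b)/2 \<ge> 0" "(s+b)/2+(s-b)/2 = s" using sb by (auto simp: field_simps)
    then show ?thesis using sb l1_soft[OF t0, of z] unfolding feasible_def T_def by auto
  qed
  have MI: "objective w z lam ((s + b)/2) ((s-b)/2) (softv z t) + (1/2)*((bp'-bm') - b)^2
          + (1/2)*(\<Sum>i\<in>UNIV. (th'$i - softv z t $i)^2) \<le> objective w z lam bp' bm' th'"
    if "feasible bp' bm' th'" for bp' bm' th'
    using main_ineq[OF lam t1 b_def hs that] .
  have sq: "0 \<le> (1/2)*(\<Sum>i\<in>UNIV. (th'$i - softv z t $i)^2)" for th' :: "real ^ 'n"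
    by (simp add: sum_nonneg)
  have isc: "is_solution w z lam cand"
    unfolding cand_def is_solution_def
  proof (simp only: prod.case, intro conjI allI impI fc)
    fix bp' bm' th' assume "feasible bp' bm' (th' :: real ^ 'n)"
    from MI[OF this] sq[of th'] zero_le_power2[of "bp' - bm' - b"] show "objective w z lam ((s + b)/2) ((s-b)/2) (softv z t) \<le> objective w z lam bp' bm' th'"
      by linarith
  qed
  have uniq: "x = cand" if "is_solution w z lam x" for x
  proof -
    obtain bp' bm' th' where x: "x = (bp', bm', th')" by (cases x) auto
    have fx: "feasible bp' bm' th'" and le: "objective w z lam bp' bm' th' \<le> objective w z lam ((s + b)/2) ((s-b)/2) (softv z t)"
      using that fc unfolding x is_solution_def by auto
    have ge: "objective w z lam ((s + b)/2) ((s-b)/2) (softv z t) \<le> objective w z lam bp' bm' th'"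
      using isc fx unfolding cand_def is_solution_def by auto
    have A: "(1/2)*((bp'-bm') - b)^2 + (1/2)*(\<Sum>i\<in>UNIV. (th'$i - softv z t $i)^2) \<le> 0"
      using MI[OF fx] le by linarith
    have B1: "((bp'-bm') - b)^2 = 0" and B2: "(\<Sum>i\<in>UNIV. (th'$i - softv z t $i)^2) = 0"
      using A sq[of th'] zero_le_power2[of "(bp'-bm') - b"] by linarith+
    have beq: "bp' - bm' = b" using B1 by simp
    have "\<forall>i\<in>UNIV. (th'$i - softv z t $i)^2 = 0"
      using B2 by (subst (asm) sum_nonneg_eq_0_iff) auto
    then have theq: "th' = softv z t" by (simp add: vec_eq_iff)
    have "objective w z lam bp' bm' th' = objective w z lam ((s + b)/2) ((s-b)/2) (softv z t)"
      using le ge by linarith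
    then have "lam * (bp' + bm') = lam * s"
      unfolding objective_def theq using beq by (simp add: field_simps)
    then have "bp' + bm' = s" using lam by simp
    then show ?thesis unfolding x cand_def theq using beq by auto
  qed
  have "solution w z lam = cand"
    unfolding solution_def using isc uniq by (rule the_equality)
  then show ?thesis unfolding theta_hat_def cand_def by simp
qed

theorem proposition2:
  fixes w :: real and z :: "real ^ 'n"
  assumes "w \<ge> 0"
  shows "\<forall>k. \<forall>lam1 lam2. 0 < lam1 \<longrightarrow> lam1 \<le> lam2 \<longrightarrow>
           \<bar>theta_hat w z lam2 $ k\<bar> \<le> \<bar>theta_hat w z lam1 $ k\<bar>"
proof (intro allI impI)
  fix k :: 'n and lam1 lam2 :: real
  assume l: "0 < lam1" "lam1 \<le> lam2"
  then have l2: "0 < lam2" by linarith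
  obtain t1 where P1: "Pt w z lam1 t1" using exists_t[OF l(1)] by blast
  obtain t2 where P2: "Pt w z lam2 t2" using exists_t[OF l2] by blast
  have "t1 \<le> t2"
  proof (rule ccontr)
    assume "\<not> t1 \<le> t2"
    then have lt: "t2 < t1" by simp
    have "Tf z t1 \<ge> w - 2*lam1 + t1" using P1 P2 lt l by (auto simp: Pt_def)
    moreover have "Tf z t2 \<le> w - 2*lam2 + t2" using P1 P2 lt l by (auto simp: Pt_def)
    moreover have "Tf z t1 \<le> Tf z t2" using lt by (intro Tf_mono) simp
    ultimately show False using lt l by linarith
  qed
  moreover have "t1 \<ge> 0" "t2 \<ge> 0" using P1 P2 l l2 by (auto simp: Pt_def)
  ultimately show "\<bar>theta_hat w z lam2 $ k\<bar> \<le> \<bar>theta_hat w z lam1 $ k\<bar>"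
    using sol_eq[OF l(1) assms P1] sol_eq[OF l2 assms P2] by (simp add: abs_soft)
qed

end
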